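(* (a) Let $X$ be a compact Hausdorff space and let $G$ be a subgroup of $\mathrm{Homeo}(X)$, carrying the topology $\sigma$ induced by the compact-open topology. Then the natural action $G\times X\to X$, $(g,x)\mapsto g(x)$, is topologically exact. (b) Let $(X,d)$ be a metric space and let $G$ be a subgroup of the isometry group $\mathrm{Is}(X,d)$, carrying the topology $\sigma$ of pointwise convergence. Then the natural action $G\times X\to X$ is topologically exact.
   Context: Let $\alpha: G\times X\to X$ be a continuous action of a Hausdorff topological group $(G,\sigma)$ on a Hausdorff topological space $(X,\tau)$. The action is called topologically exact ($t$-exact) if there is no group topology $\sigma'\subsetneq\sigma$ on $G$ (strictly coarser, not necessarily Hausdorff) such that $\alpha$ is continuous as a map $(G,\sigma')\times(X,\tau)\to(X,\tau)$. $\mathrm{Homeo}(X)$ denotes the group of all self-homeomorphisms of $X$. *)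

theory Defs
  imports "HOL-Analysis.Analysis"
begin

definition group_topology ::
  "'g set \<Rightarrow> ('g \<Rightarrow> 'g \<Rightarrow> 'g) \<Rightarrow> ('g \<Rightarrow> 'g) \<Rightarrow> 'g topology \<Rightarrow> bool" where
  "group_topology G mul inverse_op T \<longleftrightarrow>
     topspace T = G \<and>
     continuous_map (prod_topology T T) T (\<lambda>(g, h). mul g h) \<and>
     continuous_map T T inverse_op"

definition continuous_action ::
  "'g set \<Rightarrow> ('g \<Rightarrow> 'g \<Rightarrow> 'g) \<Rightarrow> ('g \<Rightarrow> 'g) \<Rightarrow> 'g \<Rightarrow> 'g topology \<Rightarrow>
   'x topology \<Rightarrow> ('g \<Rightarrow> 'x \<Rightarrow> 'x) \<Rightarrow> bool" where
  "continuous_action G mul inverse_op e T X act \<longleftrightarrow>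
     group_topology G mul inverse_op T \<and> Hausdorff_space T \<and> Hausdorff_space X \<and>
     (\<forall>x\<in>topspace X. act e x = x) \<and>
     (\<forall>g\<in>G. \<forall>h\<in>G. \<forall>x\<in>topspace X. act (mul g h) x = act g (act h x)) \<and>
     continuous_map (prod_topology T X) X (\<lambda>(g, x). act g x)"

definition t_exact ::
  "'g set \<Rightarrow> ('g \<Rightarrow> 'g \<Rightarrow> 'g) \<Rightarrow> ('g \<Rightarrow> 'g) \<Rightarrow> 'g \<Rightarrow> 'g topology \<Rightarrow>
   'x topology \<Rightarrow> ('g \<Rightarrow> 'x \<Rightarrow> 'x) \<Rightarrow> bool" where
  "t_exact G mul inverse_op e T X act \<longleftrightarrow>
     continuous_action G mul inverse_op e T X act \<and>
     \<not> (\<exists>T'. group_topology G mul inverse_op T' \<and>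
             (\<forall>U. openin T' U \<longrightarrow> openin T U) \<and>
             (\<exists>U. openin T U \<and> \<not> openin T' U) \<and>
             continuous_map (prod_topology T' X) X (\<lambda>(g, x). act g x))"

text \<open>Self-maps of a carrier S are normalised to be the identity outside S.\<close>
definition hinv :: "'a set \<Rightarrow> ('a \<Rightarrow> 'a) \<Rightarrow> ('a \<Rightarrow> 'a)" where
  "hinv S f = (\<lambda>x. if x \<in> S then inv_into S f x else x)"

definition Homeo :: "'a topology \<Rightarrow> ('a \<Rightarrow> 'a) set" where
  "Homeo X = {f. homeomorphic_map X X f \<and> (\<forall>x. x \<notin> topspace X \<longrightarrow> f x = x)}"

definition Isom :: "'a metric \<Rightarrow> ('a \<Rightarrow> 'a) set" where
  "Isom m = {f. f ` mspace m = mspace m \<and>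
     (\<forall>x\<in>mspace m. \<forall>y\<in>mspace m. mdist m (f x) (f y) = mdist m x y) \<and>
     (\<forall>x. x \<notin> mspace m \<longrightarrow> f x = x)}"

definition is_subgroup :: "'a set \<Rightarrow> ('a \<Rightarrow> 'a) set \<Rightarrow> ('a \<Rightarrow> 'a) set \<Rightarrow> bool" where
  "is_subgroup S H G \<longleftrightarrow> G \<subseteq> H \<and> id \<in> G \<and>
     (\<forall>f\<in>G. \<forall>g\<in>G. f \<circ> g \<in> G) \<and> (\<forall>f\<in>G. hinv S f \<in> G)"

text \<open>Compact-open topology restricted to G (subbase of sets [K,U]; K = {} gives G itself).\<close>
definition compact_open_topology :: "'a topology \<Rightarrow> ('a \<Rightarrow> 'a) set \<Rightarrow> ('a \<Rightarrow> 'a) topology" where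
  "compact_open_topology X G = topology_generated_by
     {{g \<in> G. g ` K \<subseteq> U} | K U. compactin X K \<and> openin X U}"

definition pointwise_topology :: "'a topology \<Rightarrow> ('a \<Rightarrow> 'a) set \<Rightarrow> ('a \<Rightarrow> 'a) topology" where
  "pointwise_topology X G = topology_generated_by
     ({G} \<union> {{g \<in> G. g x \<in> U} | x U. x \<in> topspace X \<and> openin X U})"

end

theory Submission
  imports Defs
begin


lemma cont_into_gen:
  assumes "\<And>a. a \<in> topspace A \<Longrightarrow> f a \<in> \<Union>S"
    and "\<And>s a. s \<in> S \<Longrightarrow> a \<in> topspace A \<Longrightarrow> f a \<in> s \<Longrightarrow>
           \<exists>V. openin A V \<and> a \<in> V \<and> (\<forall>x\<in>V. f x \<in> s)"
  shows "continuous_map A (topology_generated_by S) f"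
  unfolding continuous_map_def
proof (intro conjI allI impI)
  show "f \<in> topspace A \<rightarrow> topspace (topology_generated_by S)" using assms(1) by auto
next
  fix U assume "openin (topology_generated_by S) U"
  then have "generate_topology_on S U" by (rule openin_topology_generated_by)
  then show "openin A {x \<in> topspace A. f x \<in> U}"
  proof induct
    case Empty then show ?case by simp
  next
    case (Int a b)
    have "{x \<in> topspace A. f x \<in> a \<inter> b} = {x \<in> topspace A. f x \<in> a} \<inter> {x \<in> topspace A. f x \<in> b}" by auto
    then show ?case using Int by (simp add: openin_Int)
  next
    case (UN K)
    have "{x \<in> topspace A. f x \<in> \<Union>K} = \<Union>((\<lambda>k. {x \<in> topspace A. f x \<in> k}) ` K)" by auto
    then show ?case using UN by (auto intro!: openin_Union)
  next
    case (Basis s)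
    show ?case
    proof (rule openin_subopen[THEN iffD2], intro ballI)
      fix a assume "a \<in> {x \<in> topspace A. f x \<in> s}"
      then have "a \<in> topspace A" "f a \<in> s" by auto
      then have "\<exists>V. openin A V \<and> a \<in> V \<and> (\<forall>x\<in>V. f x \<in> s)" by (rule assms(2)[OF Basis])
      then obtain V where V: "openin A V" "a \<in> V" "\<forall>x\<in>V. f x \<in> s" by (elim exE conjE)
      have "V \<subseteq> {x \<in> topspace A. f x \<in> s}" using V(3) openin_subset[OF V(1)] by blast
      then show "\<exists>T. openin A T \<and> a \<in> T \<and> T \<subseteq> {x \<in> topspace A. f x \<in> s}"
        using V(1,2) by blast
    qed
  qed
qed

lemma cont_prod_local:
  assumes "\<And>a b. a \<in> topspace A \<Longrightarrow> b \<in> topspace B \<Longrightarrow> f (a,b) \<in> topspace C"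
    and "\<And>U a b. openin C U \<Longrightarrow> a \<in> topspace A \<Longrightarrow> b \<in> topspace B \<Longrightarrow> f (a,b) \<in> U \<Longrightarrow>
           \<exists>V W. openin A V \<and> openin B W \<and> a \<in> V \<and> b \<in> W \<and> (\<forall>x\<in>V. \<forall>y\<in>W. f (x,y) \<in> U)"
  shows "continuous_map (prod_topology A B) C f"
  unfolding continuous_map_def
proof (intro conjI allI impI)
  show "f \<in> topspace (prod_topology A B) \<rightarrow> topspace C" using assms(1) by auto
next
  fix U assume U: "openin C U"
  show "openin (prod_topology A B) {x \<in> topspace (prod_topology A B). f x \<in> U}"
    unfolding openin_prod_topology_alt
  proof (intro allI impI)
    fix a b assume "(a,b) \<in> {x \<in> topspace (prod_topology A B). f x \<in> U}"
    then have ab: "a \<in> topspace A" "b \<in> topspace B" "f (a,b) \<in> U" by auto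
    obtain V W where VW: "openin A V" "openin B W" "a \<in> V" "b \<in> W" "\<forall>x\<in>V. \<forall>y\<in>W. f (x,y) \<in> U"
      using assms(2)[OF U ab] by blast
    have "V \<times> W \<subseteq> {x \<in> topspace (prod_topology A B). f x \<in> U}"
      using VW openin_subset[OF VW(1)] openin_subset[OF VW(2)] by auto
    then show "\<exists>Ua V. openin A Ua \<and> openin B V \<and> a \<in> Ua \<and> b \<in> V \<and> Ua \<times> V \<subseteq> {x \<in> topspace (prod_topology A B). f x \<in> U}"
      using VW by blast
  qed
qed

lemma gen_coarser:
  assumes "generate_topology_on S u" "\<And>s. s \<in> S \<Longrightarrow> openin T s"
  shows "openin T u"
  using assms(1)
proof induct
  case (UN K) then show ?case by (auto intro!: openin_Union)
qed (auto intro: assms(2))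



lemma partA:
  fixes X :: "'a topology" and G :: "('a \<Rightarrow> 'a) set"
  assumes cX: "compact_space X" and hX: "Hausdorff_space X"
    and sg: "is_subgroup (topspace X) (Homeo X) G"
  shows "t_exact G (\<circ>) (hinv (topspace X)) id (compact_open_topology X G) X (\<lambda>g x. g x)"
proof -
  define X0 where "X0 = topspace X"
  define S where "S = {{g \<in> G. g ` K \<subseteq> U} | K U. compactin X K \<and> openin X U}"
  define T where "T = compact_open_topology X G"
  have T_def': "T = topology_generated_by S" unfolding T_def S_def compact_open_topology_def by simp
  have GH: "G \<subseteq> Homeo X" and idG: "id \<in> G" and compG: "\<And>f g. f \<in> G \<Longrightarrow> g \<in> G \<Longrightarrow> f \<circ> g \<in> G"
    and invG: "\<And>f. f \<in> G \<Longrightarrow> hinv X0 f \<in> G"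
    using sg unfolding is_subgroup_def X0_def by auto
  have hom: "homeomorphic_map X X g" if "g \<in> G" for g using GH that unfolding Homeo_def by auto
  have cont: "continuous_map X X g" if "g \<in> G" for g using hom[OF that] homeomorphic_imp_continuous_map by blast
  have surj: "g ` X0 = X0" if "g \<in> G" for g using hom[OF that] homeomorphic_imp_surjective_map X0_def by blast
  have injg: "inj_on g X0" if "g \<in> G" for g using hom[OF that] homeomorphic_imp_injective_map X0_def by blast
  have outs: "g x = x" if "g \<in> G" "x \<notin> X0" for g x using GH that unfolding Homeo_def X0_def by auto
  have inX: "g x \<in> X0" if "g \<in> G" "x \<in> X0" for g x using surj[OF that(1)] that(2) by blast
  have hinv_in: "hinv X0 g y \<in> X0" if "g \<in> G" "y \<in> X0" for g y
    using that surj[OF that(1)] unfolding hinv_def by (auto intro: inv_into_into)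
  have hinv_r: "g (hinv X0 g y) = y" if "g \<in> G" "y \<in> X0" for g y
    using that surj[OF that(1)] unfolding hinv_def by (auto intro: f_inv_into_f)
  have hinv_l: "hinv X0 g (g x) = x" if "g \<in> G" "x \<in> X0" for g x
    using that inX[OF that] injg[OF that(1)] unfolding hinv_def by auto
  have nX: "normal_space X" using cX hX compact_Hausdorff_or_regular_imp_normal_space by blast
  have basis: "openin T {g \<in> G. g ` K \<subseteq> U}" if "compactin X K" "openin X U" for K U
    unfolding T_def' by (rule topology_generated_by_Basis) (use that S_def in blast)
  have GS: "G \<in> S" unfolding S_def by (rule CollectI, rule exI[of _ "{}"], rule exI[of _ "{}"]) auto
  have topT: "topspace T = G" unfolding T_def' topology_generated_by_topspace S_def
    using GS S_def by auto
  have comp_cont: "continuous_map (prod_topology T T) T (\<lambda>(g, h). g \<circ> h)"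
    unfolding T_def'
  proof (rule cont_into_gen)
    fix a assume "a \<in> topspace (prod_topology (topology_generated_by S) (topology_generated_by S))"
    then show "(case a of (g, h) \<Rightarrow> g \<circ> h) \<in> \<Union> S" using GS compG topT T_def' by auto
  next
    fix s a assume s: "s \<in> S" and a: "a \<in> topspace (prod_topology (topology_generated_by S) (topology_generated_by S))"
      and fa: "(case a of (g, h) \<Rightarrow> g \<circ> h) \<in> s"
    obtain K U where KU: "s = {g \<in> G. g ` K \<subseteq> U}" "compactin X K" "openin X U" using s S_def by auto
    obtain f0 g0 where a2: "a = (f0, g0)" "f0 \<in> G" "g0 \<in> G" using a topT T_def' by auto
    have sub: "(f0 \<circ> g0) ` K \<subseteq> U" using fa KU a2 by auto
    define Oo where "Oo = {x \<in> topspace X. f0 x \<in> U}"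
    have oO: "openin X Oo" unfolding Oo_def by (rule openin_continuous_map_preimage[OF cont[OF a2(2)] KU(3)])
    have cK: "compactin X (g0 ` K)" by (rule image_compactin[OF KU(2) cont[OF a2(3)]])
    have clK: "closedin X (g0 ` K)" using compactin_imp_closedin[OF hX cK] .
    have sOo: "g0 ` K \<subseteq> Oo"
    proof
      fix y assume "y \<in> g0 ` K"
      then obtain k where k: "k \<in> K" "y = g0 k" by blast
      have "y \<in> topspace X" using compactin_subset_topspace[OF cK] \<open>y \<in> g0 ` K\<close> by blast
      moreover have "f0 y \<in> U" using sub k by auto
      ultimately show "y \<in> Oo" unfolding Oo_def by blast
    qed
    have "\<exists>V. openin X V \<and> g0 ` K \<subseteq> V \<and> X closure_of V \<subseteq> Oo"
      using nX[unfolded normal_space_alt] clK oO sOo by blast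
    then obtain V where V: "openin X V" "g0 ` K \<subseteq> V" "X closure_of V \<subseteq> Oo" by (elim exE conjE)
    have cV: "compactin X (X closure_of V)" using closedin_compact_space[OF cX] by simp
    have VcV: "V \<subseteq> X closure_of V" using closure_of_subset[OF openin_subset[OF V(1)]] .
    define A1 where "A1 = {f \<in> G. f ` (X closure_of V) \<subseteq> U}"
    define B1 where "B1 = {g \<in> G. g ` K \<subseteq> V}"
    have "openin (prod_topology T T) (A1 \<times> B1)"
      unfolding openin_prod_Times_iff A1_def B1_def using basis cV V(1) KU(2,3) by blast
    moreover have "a \<in> A1 \<times> B1" using a2 V unfolding A1_def B1_def Oo_def by auto
    moreover have "\<forall>x\<in>A1 \<times> B1. (case x of (g, h) \<Rightarrow> g \<circ> h) \<in> s"
      unfolding KU(1) A1_def B1_def using compG VcV by fastforce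
    ultimately show "\<exists>V. openin (prod_topology (topology_generated_by S) (topology_generated_by S)) V \<and> a \<in> V \<and>
              (\<forall>x\<in>V. (case x of (g, h) \<Rightarrow> g \<circ> h) \<in> s)" unfolding T_def' by blast
  qed
  have inv_cont: "continuous_map T T (hinv X0)"
    unfolding T_def'
  proof (rule cont_into_gen)
    fix a assume "a \<in> topspace (topology_generated_by S)"
    then show "hinv X0 a \<in> \<Union> S" using GS invG topT T_def' by auto
  next
    fix s f0 assume s: "s \<in> S" and a: "f0 \<in> topspace (topology_generated_by S)" and fa: "hinv X0 f0 \<in> s"
    obtain K U where KU: "s = {g \<in> G. g ` K \<subseteq> U}" "compactin X K" "openin X U" using s S_def by auto
    have f0G: "f0 \<in> G" using a topT T_def' by auto
    have KX: "K \<subseteq> X0" using compactin_subset_topspace[OF KU(2)] X0_def by simp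
    define V where "V = {g \<in> G. g ` (X0 - U) \<subseteq> X0 - K}"
    have key: "hinv X0 g ` K \<subseteq> U \<longleftrightarrow> g ` (X0 - U) \<subseteq> X0 - K" if g: "g \<in> G" for g
    proof
      assume h: "hinv X0 g ` K \<subseteq> U"
      show "g ` (X0 - U) \<subseteq> X0 - K"
      proof
        fix y assume "y \<in> g ` (X0 - U)"
        then obtain z where z: "z \<in> X0" "z \<notin> U" "y = g z" by auto
        have "y \<notin> K"
        proof
          assume "y \<in> K" then have "hinv X0 g y \<in> U" using h by auto
          then show False using hinv_l[OF g z(1)] z by simp
        qed
        then show "y \<in> X0 - K" using inX[OF g z(1)] z by simp
      qed
    next
      assume h: "g ` (X0 - U) \<subseteq> X0 - K"
      show "hinv X0 g ` K \<subseteq> U"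
      proof
        fix w assume "w \<in> hinv X0 g ` K"
        then obtain y where y: "y \<in> K" "w = hinv X0 g y" by auto
        have yX: "y \<in> X0" using y KX by auto
        show "w \<in> U"
        proof (rule ccontr)
          assume "w \<notin> U"
          then have "g w \<in> X0 - K" using h hinv_in[OF g yX] y by auto
          then show False using hinv_r[OF g yX] y by simp
        qed
      qed
    qed
    have "openin T V" unfolding V_def
    proof (rule basis)
      show "compactin X (X0 - U)" unfolding X0_def
        by (rule closedin_compact_space[OF cX]) (use KU(3) in auto)
      show "openin X (X0 - K)" unfolding X0_def
        using compactin_imp_closedin[OF hX KU(2)] by auto
    qed
    moreover have "f0 \<in> V" using key[OF f0G] fa KU(1) f0G V_def by auto
    moreover have "\<forall>x\<in>V. hinv X0 x \<in> s" using key invG KU(1) V_def by auto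
    ultimately show "\<exists>V. openin (topology_generated_by S) V \<and> f0 \<in> V \<and> (\<forall>x\<in>V. hinv X0 x \<in> s)"
      unfolding T_def' by blast
  qed
  have gt: "group_topology G (\<circ>) (hinv X0) T"
    unfolding group_topology_def using topT comp_cont inv_cont by simp
  have hT: "Hausdorff_space T"
    unfolding Hausdorff_space_def
  proof (intro allI impI)
    fix f g assume fg: "f \<in> topspace T \<and> g \<in> topspace T \<and> f \<noteq> g"
    then have fG: "f \<in> G" and gG: "g \<in> G" using topT by auto
    obtain x where x: "f x \<noteq> g x" using fg by auto
    have xX: "x \<in> X0"
    proof (rule ccontr)
      assume "x \<notin> X0" then show False using x outs[OF fG] outs[OF gG] by simp
    qed
    obtain U V where UV: "openin X U" "openin X V" "f x \<in> U" "g x \<in> V" "disjnt U V"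
      using hX x inX[OF fG xX] inX[OF gG xX] unfolding Hausdorff_space_def X0_def by blast
    have "openin T {h \<in> G. h ` {x} \<subseteq> U}" "openin T {h \<in> G. h ` {x} \<subseteq> V}"
      using basis[of "{x}" U] basis[of "{x}" V] UV xX X0_def by auto
    moreover have "disjnt {h \<in> G. h ` {x} \<subseteq> U} {h \<in> G. h ` {x} \<subseteq> V}"
      using UV(5) by (auto simp: disjnt_def)
    ultimately show "\<exists>U V. openin T U \<and> openin T V \<and> f \<in> U \<and> g \<in> V \<and> disjnt U V"
      using UV fG gG by blast
  qed
  have act_cont: "continuous_map (prod_topology T X) X (\<lambda>(g, x). g x)"
  proof (rule cont_prod_local)
    fix a b assume "a \<in> topspace T" "b \<in> topspace X"
    then show "(case (a, b) of (g, x) \<Rightarrow> g x) \<in> topspace X" using inX topT X0_def by auto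
  next
    fix U g0 x0 assume U: "openin X U" and g0: "g0 \<in> topspace T" and x0: "x0 \<in> topspace X"
      and in0: "(case (g0, x0) of (g, x) \<Rightarrow> g x) \<in> U"
    have g0G: "g0 \<in> G" using g0 topT by simp
    define Oo where "Oo = {x \<in> topspace X. g0 x \<in> U}"
    have oO: "openin X Oo" unfolding Oo_def by (rule openin_continuous_map_preimage[OF cont[OF g0G] U])
    have "closedin X {x0}" using hX x0 by (simp add: Hausdorff_imp_t1_space closedin_t1_singleton)
    moreover have "{x0} \<subseteq> Oo" using x0 in0 Oo_def by auto
    ultimately have "\<exists>W. openin X W \<and> {x0} \<subseteq> W \<and> X closure_of W \<subseteq> Oo"
      using nX[unfolded normal_space_alt] oO by blast
    then obtain W where W: "openin X W" "{x0} \<subseteq> W" "X closure_of W \<subseteq> Oo" by (elim exE conjE)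
    have cW: "compactin X (X closure_of W)" using closedin_compact_space[OF cX] by simp
    have WcW: "W \<subseteq> X closure_of W" using closure_of_subset[OF openin_subset[OF W(1)]] .
    define V where "V = {g \<in> G. g ` (X closure_of W) \<subseteq> U}"
    have "openin T V" unfolding V_def using basis cW U by blast
    moreover have "g0 \<in> V" using W g0G Oo_def V_def by auto
    moreover have "\<forall>x\<in>V. \<forall>y\<in>W. (case (x, y) of (g, x) \<Rightarrow> g x) \<in> U" using WcW V_def by auto
    ultimately show "\<exists>V W. openin T V \<and> openin X W \<and> g0 \<in> V \<and> x0 \<in> W \<and>
               (\<forall>x\<in>V. \<forall>y\<in>W. (case (x, y) of (g, x) \<Rightarrow> g x) \<in> U)" using W by blast
  qed
  have ca: "continuous_action G (\<circ>) (hinv X0) id T X (\<lambda>g x. g x)"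
    unfolding continuous_action_def using gt hT hX act_cont by simp
  have no: "\<not> (\<exists>T'. group_topology G (\<circ>) (hinv X0) T' \<and>
             (\<forall>U. openin T' U \<longrightarrow> openin T U) \<and>
             (\<exists>U. openin T U \<and> \<not> openin T' U) \<and>
             continuous_map (prod_topology T' X) X (\<lambda>(g, x). g x))"
  proof
    assume "\<exists>T'. group_topology G (\<circ>) (hinv X0) T' \<and>
             (\<forall>U. openin T' U \<longrightarrow> openin T U) \<and>
             (\<exists>U. openin T U \<and> \<not> openin T' U) \<and>
             continuous_map (prod_topology T' X) X (\<lambda>(g, x). g x)"
    then obtain T' U0 where T': "group_topology G (\<circ>) (hinv X0) T'" "openin T U0" "\<not> openin T' U0"
      "continuous_map (prod_topology T' X) X (\<lambda>(g, x). g x)" by blast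
    have topT': "topspace T' = G" using T'(1) unfolding group_topology_def by simp
    have bas': "openin T' s" if "s \<in> S" for s
    proof -
      obtain K U where KU: "s = {g \<in> G. g ` K \<subseteq> U}" "compactin X K" "openin X U" using \<open>s \<in> S\<close> S_def by auto
      define W where "W = {p \<in> topspace (prod_topology T' X). (case p of (g, x) \<Rightarrow> g x) \<in> U}"
      have oW: "openin (prod_topology T' X) W" unfolding W_def
        by (rule openin_continuous_map_preimage[OF T'(4) KU(3)])
      show ?thesis
      proof (rule openin_subopen[THEN iffD2], intro ballI)
        fix g assume g: "g \<in> s"
        then have gG: "g \<in> topspace T'" using KU topT' by auto
        have "{g} \<times> K \<subseteq> W" using g KU compactin_subset_topspace[OF KU(2)] gG unfolding W_def by auto
        then obtain V1 V2 where V: "openin T' V1" "openin X V2" "g \<in> V1" "K \<subseteq> V2" "V1 \<times> V2 \<subseteq> W"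
          using tube_lemma_right[OF oW KU(2) gG] by blast
        have "V1 \<subseteq> s"
        proof
          fix h assume h: "h \<in> V1"
          then have "h \<in> G" using openin_subset[OF V(1)] topT' by auto
          moreover have "h ` K \<subseteq> U"
          proof
            fix y assume "y \<in> h ` K"
            then obtain k where k: "k \<in> K" "y = h k" by blast
            then have "(h, k) \<in> V1 \<times> V2" using V h by blast
            then have "(h, k) \<in> W" using V(5) by blast
            then show "y \<in> U" unfolding W_def using k by simp
          qed
          ultimately show "h \<in> s" using KU by auto
        qed
        then show "\<exists>T. openin T' T \<and> g \<in> T \<and> T \<subseteq> s" using V by blast
      qed
    qed
    have "openin T' U0"
      using T'(2) unfolding T_def' openin_topology_generated_by_iff
      by (rule gen_coarser) (rule bas')
    then show False using T'(3) by simp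
  qed
  show ?thesis using ca no unfolding t_exact_def T_def X0_def by simp
qed



lemma partB:
  fixes m :: "'b metric" and G :: "('b \<Rightarrow> 'b) set"
  assumes sg: "is_subgroup (mspace m) (Isom m) G"
  shows "t_exact G (\<circ>) (hinv (mspace m)) id
              (pointwise_topology (mtopology_of m) G) (mtopology_of m) (\<lambda>g x. g x)"
proof -
  interpret M: Metric_space "mspace m" "mdist m" by simp
  define X where "X = mtopology_of m"
  have XM: "X = M.mtopology" unfolding X_def mtopology_of_def by simp
  define Ms where "Ms = mspace m"
  define d where "d = mdist m"
  define S where "S = {G} \<union> {{g \<in> G. g x \<in> U} | x U. x \<in> topspace X \<and> openin X U}"
  define T where "T = pointwise_topology X G"
  have T_def': "T = topology_generated_by S" unfolding T_def S_def pointwise_topology_def by simp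
  have topX: "topspace X = Ms" unfolding X_def Ms_def by simp
  have GH: "G \<subseteq> Isom m" and idG: "id \<in> G" and compG: "\<And>f g. f \<in> G \<Longrightarrow> g \<in> G \<Longrightarrow> f \<circ> g \<in> G"
    and invG: "\<And>f. f \<in> G \<Longrightarrow> hinv Ms f \<in> G"
    using sg unfolding is_subgroup_def Ms_def by auto
  have surj: "g ` Ms = Ms" if "g \<in> G" for g
  proof -
    have "g \<in> Isom m" using GH that by blast
    then show ?thesis unfolding Isom_def Ms_def by simp
  qed
  have iso: "d (g x) (g y) = d x y" if "g \<in> G" "x \<in> Ms" "y \<in> Ms" for g x y
    using GH that unfolding Isom_def Ms_def d_def by auto
  have outs: "g x = x" if "g \<in> G" "x \<notin> Ms" for g x using GH that unfolding Isom_def Ms_def by auto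
  have inX: "g x \<in> Ms" if "g \<in> G" "x \<in> Ms" for g x using surj[OF that(1)] that(2) by blast
  have hinv_in: "hinv Ms g y \<in> Ms" if "g \<in> G" "y \<in> Ms" for g y
    using that surj[OF that(1)] unfolding hinv_def by (auto intro: inv_into_into)
  have hinv_r: "g (hinv Ms g y) = y" if "g \<in> G" "y \<in> Ms" for g y
    using that surj[OF that(1)] unfolding hinv_def by (auto intro: f_inv_into_f)
  have tri: "d x z \<le> d x y + d y z" if "x \<in> Ms" "y \<in> Ms" "z \<in> Ms" for x y z
    using that unfolding d_def Ms_def by (rule M.triangle)
  have com: "d x y = d y x" for x y unfolding d_def by (rule M.commute)
  have d0: "d x x = 0" if "x \<in> Ms" for x using that unfolding d_def Ms_def by simp
  have inball: "y \<in> M.mball x r \<longleftrightarrow> x \<in> Ms \<and> y \<in> Ms \<and> d x y < r" for x y r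
    unfolding Ms_def d_def by simp
  have ballopen: "openin X (M.mball x r)" for x r unfolding XM by simp
  have getball: "\<exists>r>0. M.mball x r \<subseteq> U" if "openin X U" "x \<in> U" for U x
    using that unfolding XM M.openin_mtopology by blast
  have basis: "openin T {g \<in> G. g x \<in> U}" if "x \<in> Ms" "openin X U" for x U
    unfolding T_def' by (rule topology_generated_by_Basis) (use that S_def topX in blast)
  have GS: "G \<in> S" unfolding S_def by simp
  have topT: "topspace T = G" unfolding T_def' topology_generated_by_topspace S_def by auto
  have Gopen: "openin T G" using topT by (metis openin_topspace)
  have comp_cont: "continuous_map (prod_topology T T) T (\<lambda>(g, h). g \<circ> h)"
    unfolding T_def'
  proof (rule cont_into_gen)
    fix a assume "a \<in> topspace (prod_topology (topology_generated_by S) (topology_generated_by S))"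
    then show "(case a of (g, h) \<Rightarrow> g \<circ> h) \<in> \<Union> S" using GS compG topT T_def' by auto
  next
    fix s a assume s: "s \<in> S" and a: "a \<in> topspace (prod_topology (topology_generated_by S) (topology_generated_by S))"
      and fa: "(case a of (g, h) \<Rightarrow> g \<circ> h) \<in> s"
    obtain f0 g0 where a2: "a = (f0, g0)" "f0 \<in> G" "g0 \<in> G" using a topT T_def' by auto
    show "\<exists>V. openin (prod_topology (topology_generated_by S) (topology_generated_by S)) V \<and> a \<in> V \<and>
              (\<forall>x\<in>V. (case x of (g, h) \<Rightarrow> g \<circ> h) \<in> s)"
    proof (cases "s = G")
      case True
      have "openin (prod_topology T T) (G \<times> G)" using Gopen openin_prod_Times_iff by blast
      moreover have "a \<in> G \<times> G" using a2 by simp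
      moreover have "\<forall>x\<in>G \<times> G. (case x of (g, h) \<Rightarrow> g \<circ> h) \<in> s" using True compG by auto
      ultimately show ?thesis unfolding T_def' by blast
    next
      case False
      then obtain x U where xU: "s = {g \<in> G. g x \<in> U}" "x \<in> Ms" "openin X U" using s S_def topX by auto
      define c where "c = f0 (g0 x)"
      have cU: "c \<in> U" using fa xU a2 c_def by auto
      obtain r where r: "r > 0" "M.mball c r \<subseteq> U" using getball[OF xU(3) cU] by blast
      have g0x: "g0 x \<in> Ms" using inX a2 xU by auto
      have cM: "c \<in> Ms" using inX a2 g0x c_def by auto
      define A1 where "A1 = {f \<in> G. f (g0 x) \<in> M.mball c (r/2)}"
      define B1 where "B1 = {g \<in> G. g x \<in> M.mball (g0 x) (r/2)}"
      have "openin (prod_topology T T) (A1 \<times> B1)"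
        unfolding openin_prod_Times_iff A1_def B1_def using basis ballopen g0x xU(2) by blast
      moreover have "a \<in> A1 \<times> B1" using a2 r d0 cM g0x inball unfolding A1_def B1_def c_def by (auto simp: Ms_def d_def)
      moreover have "(case p of (g, h) \<Rightarrow> g \<circ> h) \<in> s" if p: "p \<in> A1 \<times> B1" for p
      proof -
        obtain f g where fg: "p = (f, g)" "f \<in> G" "g \<in> G" "f (g0 x) \<in> M.mball c (r/2)" "g x \<in> M.mball (g0 x) (r/2)"
          using p unfolding A1_def B1_def by auto
        have gx: "g x \<in> Ms" using inX fg xU by auto
        have fgx: "f (g x) \<in> Ms" using inX fg gx by auto
        have fg0x: "f (g0 x) \<in> Ms" using inX fg g0x by auto
        have "d c (f (g x)) \<le> d c (f (g0 x)) + d (f (g0 x)) (f (g x))" using tri cM fgx fg0x by blast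
        moreover have "d (f (g0 x)) (f (g x)) = d (g0 x) (g x)" using iso fg g0x gx by blast
        moreover have "d c (f (g0 x)) < r/2" "d (g0 x) (g x) < r/2" using fg(4,5) inball by blast+
        ultimately have "d c (f (g x)) < r" by linarith
        then have "f (g x) \<in> U" using r cM fgx inball by blast
        then show ?thesis using fg compG xU by auto
      qed
      ultimately show ?thesis unfolding T_def' by blast
    qed
  qed
  have inv_cont: "continuous_map T T (hinv Ms)"
    unfolding T_def'
  proof (rule cont_into_gen)
    fix a assume "a \<in> topspace (topology_generated_by S)"
    then show "hinv Ms a \<in> \<Union> S" using GS invG topT T_def' by auto
  next
    fix s f0 assume s: "s \<in> S" and a: "f0 \<in> topspace (topology_generated_by S)" and fa: "hinv Ms f0 \<in> s"
    have f0G: "f0 \<in> G" using a topT T_def' by auto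
    show "\<exists>V. openin (topology_generated_by S) V \<and> f0 \<in> V \<and> (\<forall>x\<in>V. hinv Ms x \<in> s)"
    proof (cases "s = G")
      case True
      then show ?thesis using a invG T_def' topT Gopen by (intro exI[of _ G]) auto
    next
      case False
      then obtain x U where xU: "s = {g \<in> G. g x \<in> U}" "x \<in> Ms" "openin X U" using s S_def topX by auto
      define y where "y = hinv Ms f0 x"
      have yU: "y \<in> U" using fa xU y_def by auto
      have yM: "y \<in> Ms" using hinv_in f0G xU y_def by auto
      have f0y: "f0 y = x" using hinv_r f0G xU y_def by auto
      obtain r where r: "r > 0" "M.mball y r \<subseteq> U" using getball[OF xU(3) yU] by blast
      define V where "V = {f \<in> G. f y \<in> M.mball x r}"
      have "openin T V" unfolding V_def using basis ballopen yM by blast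
      moreover have "f0 \<in> V" using f0G f0y r xU d0 inball V_def by auto
      moreover have "hinv Ms f \<in> s" if f: "f \<in> V" for f
      proof -
        have fG: "f \<in> G" and fy: "d x (f y) < r" using f inball[of "f y" x] unfolding V_def by blast+
        define z where "z = hinv Ms f x"
        have zM: "z \<in> Ms" using hinv_in fG xU z_def by auto
        have "d y z = d (f y) (f z)" using iso fG yM zM by simp
        also have "f z = x" using hinv_r fG xU z_def by auto
        finally have "d y z < r" using fy com by simp
        then have "z \<in> U" using r yM zM inball by blast
        then show ?thesis using invG fG xU z_def by auto
      qed
      ultimately show ?thesis unfolding T_def' by blast
    qed
  qed
  have gt: "group_topology G (\<circ>) (hinv Ms) T"
    unfolding group_topology_def using topT comp_cont inv_cont by simp
  have hX: "Hausdorff_space X" unfolding XM by (rule M.Hausdorff_space_mtopology)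
  have hT: "Hausdorff_space T"
    unfolding Hausdorff_space_def
  proof (intro allI impI)
    fix f g assume fg: "f \<in> topspace T \<and> g \<in> topspace T \<and> f \<noteq> g"
    then have fG: "f \<in> G" and gG: "g \<in> G" using topT by auto
    obtain x where x: "f x \<noteq> g x" using fg by auto
    have xX: "x \<in> Ms"
    proof (rule ccontr)
      assume "x \<notin> Ms" then show False using x outs[OF fG] outs[OF gG] by simp
    qed
    obtain U V where UV: "openin X U" "openin X V" "f x \<in> U" "g x \<in> V" "disjnt U V"
      using hX x inX[OF fG xX] inX[OF gG xX] topX unfolding Hausdorff_space_def by blast
    have "openin T {h \<in> G. h x \<in> U}" "openin T {h \<in> G. h x \<in> V}"
      using basis[of x U] basis[of x V] UV xX by auto
    moreover have "disjnt {h \<in> G. h x \<in> U} {h \<in> G. h x \<in> V}"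
      using UV(5) by (auto simp: disjnt_def)
    ultimately show "\<exists>U V. openin T U \<and> openin T V \<and> f \<in> U \<and> g \<in> V \<and> disjnt U V"
      using UV fG gG by blast
  qed
  have act_cont: "continuous_map (prod_topology T X) X (\<lambda>(g, x). g x)"
  proof (rule cont_prod_local)
    fix a b assume "a \<in> topspace T" "b \<in> topspace X"
    then show "(case (a, b) of (g, x) \<Rightarrow> g x) \<in> topspace X" using inX topT topX by auto
  next
    fix U g0 x0 assume U: "openin X U" and g0: "g0 \<in> topspace T" and x0: "x0 \<in> topspace X"
      and in0: "(case (g0, x0) of (g, x) \<Rightarrow> g x) \<in> U"
    have g0G: "g0 \<in> G" using g0 topT by simp
    have x0M: "x0 \<in> Ms" using x0 topX by simp
    define c where "c = g0 x0"
    have cM: "c \<in> Ms" using inX g0G x0M c_def by auto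
    obtain r where r: "r > 0" "M.mball c r \<subseteq> U" using getball[OF U] in0 c_def by auto
    define V where "V = {g \<in> G. g x0 \<in> M.mball c (r/2)}"
    define W where "W = M.mball x0 (r/2)"
    have "openin T V" unfolding V_def using basis ballopen x0M by blast
    moreover have "openin X W" unfolding W_def by (rule ballopen)
    moreover have "g0 \<in> V" using g0G r d0 cM inball V_def c_def by (auto simp: Ms_def d_def)
    moreover have "x0 \<in> W" using x0M r d0 inball W_def by (auto simp: Ms_def d_def)
    moreover have "g x \<in> U" if g: "g \<in> V" and x: "x \<in> W" for g x
    proof -
      have gG: "g \<in> G" and gx0: "d c (g x0) < r/2" using g inball[of "g x0" c] unfolding V_def by blast+
      have xM: "x \<in> Ms" and dx: "d x0 x < r/2" using x inball[of x x0] unfolding W_def by blast+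
      have gxM: "g x \<in> Ms" and gx0M: "g x0 \<in> Ms" using inX gG xM x0M by auto
      have "d c (g x) \<le> d c (g x0) + d (g x0) (g x)" using tri cM gxM gx0M by blast
      also have "d (g x0) (g x) = d x0 x" using iso gG x0M xM by blast
      finally have "d c (g x) < r" using gx0 dx by simp
      then show ?thesis using r cM gxM inball by blast
    qed
    ultimately show "\<exists>V W. openin T V \<and> openin X W \<and> g0 \<in> V \<and> x0 \<in> W \<and>
               (\<forall>x\<in>V. \<forall>y\<in>W. (case (x, y) of (g, x) \<Rightarrow> g x) \<in> U)" by auto
  qed
  have ca: "continuous_action G (\<circ>) (hinv Ms) id T X (\<lambda>g x. g x)"
    unfolding continuous_action_def using gt hT hX act_cont by simp
  have no: "\<not> (\<exists>T'. group_topology G (\<circ>) (hinv Ms) T' \<and>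
             (\<forall>U. openin T' U \<longrightarrow> openin T U) \<and>
             (\<exists>U. openin T U \<and> \<not> openin T' U) \<and>
             continuous_map (prod_topology T' X) X (\<lambda>(g, x). g x))"
  proof
    assume "\<exists>T'. group_topology G (\<circ>) (hinv Ms) T' \<and>
             (\<forall>U. openin T' U \<longrightarrow> openin T U) \<and>
             (\<exists>U. openin T U \<and> \<not> openin T' U) \<and>
             continuous_map (prod_topology T' X) X (\<lambda>(g, x). g x)"
    then obtain T' U0 where T': "group_topology G (\<circ>) (hinv Ms) T'" "openin T U0" "\<not> openin T' U0"
      "continuous_map (prod_topology T' X) X (\<lambda>(g, x). g x)" by blast
    have topT': "topspace T' = G" using T'(1) unfolding group_topology_def by simp
    have bas': "openin T' s" if "s \<in> S" for s
    proof (cases "s = G")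
      case True then show ?thesis using topT' by (metis openin_topspace)
    next
      case False
      then obtain x U where xU: "s = {g \<in> G. g x \<in> U}" "x \<in> Ms" "openin X U" using \<open>s \<in> S\<close> S_def topX by auto
      define W where "W = {p \<in> topspace (prod_topology T' X). (case p of (g, x) \<Rightarrow> g x) \<in> U}"
      have oW: "openin (prod_topology T' X) W" unfolding W_def
        by (rule openin_continuous_map_preimage[OF T'(4) xU(3)])
      show ?thesis
      proof (rule openin_subopen[THEN iffD2], intro ballI)
        fix g assume g: "g \<in> s"
        then have gG: "g \<in> topspace T'" using xU topT' by auto
        have gxW: "(g, x) \<in> W" using g xU gG topX unfolding W_def by auto
        have "\<exists>V1 V2. openin T' V1 \<and> openin X V2 \<and> g \<in> V1 \<and> x \<in> V2 \<and> V1 \<times> V2 \<subseteq> W"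
          using oW[unfolded openin_prod_topology_alt, rule_format, OF gxW] .
        then obtain V1 V2 where V: "openin T' V1" "openin X V2" "g \<in> V1" "x \<in> V2" "V1 \<times> V2 \<subseteq> W"
          by (elim exE conjE)
        have "V1 \<subseteq> s"
        proof
          fix h assume h: "h \<in> V1"
          then have "(h, x) \<in> V1 \<times> V2" using V by blast
          then have "(h, x) \<in> W" using V(5) by blast
          then show "h \<in> s" unfolding W_def xU(1) using topT' by simp
        qed
        then show "\<exists>T. openin T' T \<and> g \<in> T \<and> T \<subseteq> s" using V by blast
      qed
    qed
    have "openin T' U0"
      using T'(2) unfolding T_def' openin_topology_generated_by_iff
      by (rule gen_coarser) (rule bas')
    then show False using T'(3) by simp
  qed
  show ?thesis using ca no unfolding t_exact_def T_def X_def Ms_def by simp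
qed


theorem lemma2p3:
  shows "(\<forall>(X :: 'a topology) G.
            compact_space X \<and> Hausdorff_space X \<and> is_subgroup (topspace X) (Homeo X) G \<longrightarrow>
            t_exact G (\<circ>) (hinv (topspace X)) id (compact_open_topology X G) X (\<lambda>g x. g x))
       \<and> (\<forall>(m :: 'b metric) G.
            is_subgroup (mspace m) (Isom m) G \<longrightarrow>
            t_exact G (\<circ>) (hinv (mspace m)) id
              (pointwise_topology (mtopology_of m) G) (mtopology_of m) (\<lambda>g x. g x))"
  using partA partB by blast

end
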